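(* Let $m_1 > m_2 \ge 2$ and $z \ge 1$ be integers and let $G_j$ be a second kind of ideal center graph (defined in the context): its vertex set is $\{v_j\}\cup A_1 \cup B$, where $v_j$ is adjacent to all other vertices, $A_1$ is a clique of size $m_1-1$ (so $A_1\cup\{v_j\}$ is the maximum clique, of size $m_1$), $B$ induces a complete multipartite graph with $m_2-1$ parts each an independent set of $z$ vertices, and there are no edges between $A_1$ and $B$. Let $A$ be the adjacency matrix of $G_j$, $\lambda_1$ its largest eigenvalue with eigenvector $|\lambda_1\rangle$, and for a vertex $v_l$ let $p_{l,1} = \langle l|\lambda_1\rangle\langle\lambda_1|j\rangle$. Let $v_l$ be a member of the maximum clique of $G_j$ and $v_k$ a vertex not in the maximum clique. If \[ m_1 - 2 < z(m_2-2), \] then \[ p_{l,1} < p_{k,1}, \] i.e. (for $v_l\neq v_j$) $\left|\frac{1}{m_1-2-\lambda_1}\right| < \left|\frac{1}{z(m_2-2)-\lambda_1}\right|$.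
   Context: A graph $G_j$ is a center graph with center vertex $v_j$ if $v_j$ is adjacent to all other vertices. The second kind of ideal center graph is obtained from a center graph consisting of two cliques sharing only the center vertex (with no edges between their other vertices) by replacing the smaller clique (minus the center) with a complete multipartite graph, all of whose vertices remain adjacent to the center, while keeping the maximum clique unchanged; here $z$ is the number of vertices in each independent set (part) and $m_2-1$ the number of parts. The continuous time quantum walk on a graph with adjacency matrix $A$ (vertices identified with an orthonormal basis $|1\rangle,\dots,|N\rangle$) has amplitude $\alpha_{l,j}(t) = \langle l|e^{iAt}|j\rangle = \sum_n e^{i\lambda_n t}\langle l|\lambda_n\rangle\langle\lambda_n|j\rangle$, where $\lambda_1\ge\dots\ge\lambda_N$ are the eigenvalues of $A$ with orthonormal eigenvectors $|\lambda_n\rangle$; $p_{l,n}=\langle l|\lambda_n\rangle\langle\lambda_n|j\rangle$ is the intensity of frequency $\lambda_n$ in $\alpha_{l,j}$. *)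

theory Defs
  imports Complex_Main
begin

text \<open>Vertex 0 is the center v_j;
  vertices 1 ..< m1 form the clique A_1 (size m1 - 1);
  vertices m1 ..< skc_N form B, the complete multipartite graph with
  m2 - 1 parts of z vertices each, vertex m1 + q*z + r lying in part q.\<close>

definition skc_N :: "nat \<Rightarrow> nat \<Rightarrow> nat \<Rightarrow> nat" where
  "skc_N m1 m2 z = 1 + (m1 - 1) + z * (m2 - 1)"

definition skc_adj :: "nat \<Rightarrow> nat \<Rightarrow> nat \<Rightarrow> nat \<Rightarrow> nat \<Rightarrow> bool" where
  "skc_adj m1 m2 z u v \<longleftrightarrow>
     u < skc_N m1 m2 z \<and> v < skc_N m1 m2 z \<and> u \<noteq> v \<and>
     (u = 0 \<or> v = 0 \<or> (u < m1 \<and> v < m1) \<or>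
      (m1 \<le> u \<and> m1 \<le> v \<and> (u - m1) div z \<noteq> (v - m1) div z))"

definition skc_A :: "nat \<Rightarrow> nat \<Rightarrow> nat \<Rightarrow> nat \<Rightarrow> nat \<Rightarrow> real" where
  "skc_A m1 m2 z u v = (if skc_adj m1 m2 z u v then 1 else 0)"

definition is_eigvec :: "nat \<Rightarrow> (nat \<Rightarrow> nat \<Rightarrow> real) \<Rightarrow> real \<Rightarrow> (nat \<Rightarrow> real) \<Rightarrow> bool" where
  "is_eigvec n M \<mu> y \<longleftrightarrow>
     (\<forall>i<n. (\<Sum>k<n. M i k * y k) = \<mu> * y i) \<and> (\<exists>i<n. y i \<noteq> 0)"

definition is_eigval :: "nat \<Rightarrow> (nat \<Rightarrow> nat \<Rightarrow> real) \<Rightarrow> real \<Rightarrow> bool" where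
  "is_eigval n M \<mu> \<longleftrightarrow> (\<exists>y. is_eigvec n M \<mu> y)"

definition intensity :: "(nat \<Rightarrow> real) \<Rightarrow> nat \<Rightarrow> nat \<Rightarrow> real" where
  "intensity x l j = x l * x j"

end

theory Submission
  imports Defs
begin

lemma divq: "0 < (z::nat) \<Longrightarrow> (d div z = q) = (q*z \<le> d \<and> d < q*z + z)"
proof
  assume z: "0 < z" and "d div z = q"
  moreover have "d = (d div z)*z + d mod z" by simp
  moreover have "d mod z < z" using z by simp
  ultimately show "q*z \<le> d \<and> d < q*z + z" by (metis le_add1 add_less_cancel_left)
next
  assume "0 < z" "q*z \<le> d \<and> d < q*z + z"
  thus "d div z = q" by (intro div_nat_eqI) (auto simp: algebra_simps)
qed

definition pt :: "nat \<Rightarrow> nat \<Rightarrow> nat \<Rightarrow> nat set" where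
  "pt m1 z b = {m1 + ((b-m1) div z)*z ..< m1 + ((b-m1) div z)*z + z}"

lemma rowsum: "(\<Sum>k<skc_N m1 m2 z. skc_A m1 m2 z i k * y k)
   = sum y {k. k < skc_N m1 m2 z \<and> skc_adj m1 m2 z i k}"
proof -
  have "(\<Sum>k<skc_N m1 m2 z. skc_A m1 m2 z i k * y k)
     = (\<Sum>k\<in>{..<skc_N m1 m2 z}. if skc_adj m1 m2 z i k then y k else 0)"
    by (intro sum.cong) (auto simp: skc_A_def)
  also have "\<dots> = sum y {k\<in>{..<skc_N m1 m2 z}. skc_adj m1 m2 z i k}"
    by (rule sum.inter_filter[symmetric]) simp
  also have "{k\<in>{..<skc_N m1 m2 z}. skc_adj m1 m2 z i k} = {k. k < skc_N m1 m2 z \<and> skc_adj m1 m2 z i k}"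
    by auto
  finally show ?thesis .
qed

lemma N_eq: "1 \<le> m1 \<Longrightarrow> skc_N m1 m2 z = m1 + z*(m2-1)"
  by (simp add: skc_N_def)

lemma nb0: "1 \<le> m1 \<Longrightarrow> {k. k < skc_N m1 m2 z \<and> skc_adj m1 m2 z 0 k} = {1..<skc_N m1 m2 z}"
  by (auto simp: skc_adj_def N_eq)

lemma nbA: "1 \<le> a \<Longrightarrow> a < m1 \<Longrightarrow>
  {k. k < skc_N m1 m2 z \<and> skc_adj m1 m2 z a k} = insert 0 ({1..<m1} - {a})"
  by (auto simp: skc_adj_def N_eq)

lemma pt_props:
  assumes "0 < z" "m1 \<le> b" "b < skc_N m1 m2 z" "1 \<le> m1"
  shows "pt m1 z b \<subseteq> {m1..<skc_N m1 m2 z}" "card (pt m1 z b) = z"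
    "\<And>k. m1 \<le> k \<Longrightarrow> k \<in> pt m1 z b \<longleftrightarrow> (k - m1) div z = (b - m1) div z"
proof -
  have "b - m1 < z*(m2-1)" using assms by (simp add: N_eq)
  hence q: "(b - m1) div z < m2 - 1"
    by (simp add: div_less_iff_less_mult mult.commute assms(1))
  hence "((b - m1) div z + 1) * z \<le> (m2-1) * z" using assms(1)
    by (metis Suc_eq_plus1 Suc_leI mult_le_mono1)
  thus "pt m1 z b \<subseteq> {m1..<skc_N m1 m2 z}" using assms
    by (auto simp: pt_def N_eq algebra_simps)
  show "card (pt m1 z b) = z" by (simp add: pt_def)
  fix k assume "m1 \<le> k"
  thus "k \<in> pt m1 z b \<longleftrightarrow> (k - m1) div z = (b - m1) div z"
    using divq[OF assms(1), of "k - m1" "(b-m1) div z"] by (auto simp: pt_def)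
qed

lemma nbB: assumes "0 < z" "m1 \<le> b" "b < skc_N m1 m2 z" "1 \<le> m1"
  shows "{k. k < skc_N m1 m2 z \<and> skc_adj m1 m2 z b k} = insert 0 ({m1..<skc_N m1 m2 z} - pt m1 z b)"
  using assms pt_props(3)[OF assms] by (auto simp: skc_adj_def)

lemma pt_same: assumes "0 < z" "m1 \<le> b" "b < skc_N m1 m2 z" "1 \<le> m1" "b' \<in> pt m1 z b"
  shows "pt m1 z b' = pt m1 z b"
proof -
  have "m1 \<le> b'" using assms pt_props(1)[OF assms(1-4)] by auto
  hence "(b' - m1) div z = (b - m1) div z" using pt_props(3)[OF assms(1-4)] assms(5) by blast
  thus ?thesis by (simp add: pt_def)
qed


lemma sum_const_on: "finite S \<Longrightarrow> (\<And>k. k \<in> S \<Longrightarrow> y k = v) \<Longrightarrow> sum y S = real (card S) * (v::real)"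
  by (simp add: sum.cong[of S S y "\<lambda>_. v"])

lemma sum_const_on': "finite S \<Longrightarrow> (\<And>k. k \<in> S \<Longrightarrow> y k = v) \<Longrightarrow> real (card S) = C \<Longrightarrow> sum y S = C * (v::real)"
  using sum_const_on by metis

lemma exists_mu:
  fixes c n s :: real
  assumes "c < n" "0 < s" "0 < c + 1"
  shows "\<exists>\<mu>>n. (c+1)*(\<mu>-n) + s*(\<mu>-c) = \<mu>*(\<mu>-c)*(\<mu>-n)"
proof -
  define f where "f \<mu> = (c+1)*(\<mu>-n) + s*(\<mu>-c) - \<mu>*(\<mu>-c)*(\<mu>-n)" for \<mu>
  define T where "T = \<bar>c\<bar> + \<bar>n\<bar> + s + 2"
  have T1: "T - c \<ge> 1" "T - n \<ge> 1" "T > c + 1 + s" using assms unfolding T_def by auto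
  have "(c+1)*(T-n) + s*(T-c) \<le> (c+1)*((T-c)*(T-n)) + s*((T-c)*(T-n))"
    using T1 assms
    by (intro add_mono mult_left_mono) (auto intro: mult_right_mono[of 1 "T-c" "T-n", simplified]
        mult_left_mono[of 1 "T-n" "T-c", simplified])
  also have "\<dots> = (c+1+s)*((T-c)*(T-n))" by (simp add: algebra_simps)
  also have "\<dots> < T*((T-c)*(T-n))"
    using T1 by (intro mult_strict_right_mono) (auto intro: mult_pos_pos)
  finally have fT: "f T < 0" unfolding f_def by (simp add: algebra_simps)
  have fn: "f n > 0" unfolding f_def using assms by simp
  have "n \<le> T" using T1 by simp
  have "\<forall>x. n \<le> x \<and> x \<le> T \<longrightarrow> isCont f x" unfolding f_def by (auto intro!: continuous_intros)
  from IVT2[of f T 0 n, OF _ _ \<open>n \<le> T\<close> this] fT fn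
  obtain \<mu> where "n \<le> \<mu>" "\<mu> \<le> T" "f \<mu> = 0" by force
  moreover have "\<mu> \<noteq> n" using fn \<open>f \<mu> = 0\<close> by auto
  ultimately show ?thesis unfolding f_def by (intro exI[of _ \<mu>]) auto
qed

theorem theorem2:
  fixes m1 m2 z l k :: nat and lam :: real and x :: "nat \<Rightarrow> real"
  assumes "m1 > m2" and "m2 \<ge> 2" and "z \<ge> 1"
    and "is_eigvec (skc_N m1 m2 z) (skc_A m1 m2 z) lam x"
    and "(\<Sum>i<skc_N m1 m2 z. (x i)\<^sup>2) = 1"
    and "\<forall>\<mu>. is_eigval (skc_N m1 m2 z) (skc_A m1 m2 z) \<mu> \<longrightarrow> \<mu> \<le> lam"
    and "1 \<le> l" and "l < m1"
    and "m1 \<le> k" and "k < skc_N m1 m2 z"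
    and "real m1 - 2 < real z * (real m2 - 2)"
  shows "intensity x l 0 < intensity x k 0 \<and>
         \<bar>1 / (real m1 - 2 - lam)\<bar> < \<bar>1 / (real z * (real m2 - 2) - lam)\<bar>"
proof -
  define N where "N = skc_N m1 m2 z"
  define c where "c = real m1 - 2"
  define n where "n = real z * (real m2 - 2)"
  have m1: "1 \<le> m1" "3 \<le> m1" using assms by auto
  have z0: "0 < z" using assms by auto
  have NN: "N = m1 + z*(m2-1)" using N_eq[OF m1(1)] N_def by simp
  have cardB: "real (card {m1..<N}) = real z * (real m2 - 1)"
    using NN assms(2) by (simp add: of_nat_diff)
  have cardA: "real (card {1..<m1}) = c + 1" using m1 by (simp add: c_def of_nat_diff)
  have cardA': "a \<in> {1..<m1} \<Longrightarrow> real (card ({1..<m1} - {a})) = c" for a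
    using m1 by (simp add: c_def of_nat_diff)
  have cardB': "b \<in> {m1..<N} \<Longrightarrow> real (card ({m1..<N} - pt m1 z b)) = n" for b
  proof -
    assume b: "b \<in> {m1..<N}"
    have "card ({m1..<N} - pt m1 z b) = card {m1..<N} - card (pt m1 z b)"
      using pt_props(1)[OF z0, of m1 b m2] b m1 N_def by (intro card_Diff_subset) (auto intro: finite_subset)
    also have "\<dots> = z*(m2-1) - z" using pt_props(2)[OF z0, of m1 b m2] b m1 N_def NN by auto
    also have "\<dots> = z*(m2-2)" using assms(2) by (simp add: algebra_simps diff_mult_distrib2)
    finally show ?thesis using assms(2) by (simp add: n_def of_nat_diff)
  qed
  have cn: "c < n" using assms(11) by (simp add: c_def n_def)
  \<comment> \<open>an explicit eigenvector with eigenvalue above n\<close>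
  obtain \<mu> where mu: "\<mu> > n" "(c+1)*(\<mu>-n) + real z * (real m2 - 1)*(\<mu>-c) = \<mu>*(\<mu>-c)*(\<mu>-n)"
    using exists_mu[OF cn, of "real z * (real m2 - 1)"] assms(2,3) m1 c_def by force
  have muc: "\<mu> > c" using mu cn by simp
  define y where "y i = (if i = 0 then 1 else if i < m1 then 1/(\<mu>-c) else 1/(\<mu>-n))" for i
  have "is_eigvec N (skc_A m1 m2 z) \<mu> y"
    unfolding is_eigvec_def
  proof (intro conjI allI impI)
    show "\<exists>i<N. y i \<noteq> 0" using NN m1 by (intro exI[of _ 0]) (auto simp: y_def)
    fix i assume i: "i < N"
    have rs: "(\<Sum>k<N. skc_A m1 m2 z i k * y k) = sum y {k. k < N \<and> skc_adj m1 m2 z i k}"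
      using rowsum N_def by simp
    show "(\<Sum>k<N. skc_A m1 m2 z i k * y k) = \<mu> * y i"
    proof (cases "i = 0")
      case True
      have "sum y {1..<N} = sum y {1..<m1} + sum y {m1..<N}"
        using NN m1 by (intro sum.atLeastLessThan_concat[symmetric]) auto
      also have "sum y {1..<m1} = (c+1) * (1/(\<mu>-c))"
        by (rule sum_const_on'[of _ _ "1/(\<mu>-c)"]) (use cardA  in \<open>auto simp: y_def\<close>)
      also have "sum y {m1..<N} = real z * (real m2 - 1) * (1/(\<mu>-n))"
        by (rule sum_const_on'[of _ _ "1/(\<mu>-n)"]) (use cardB m1  in \<open>auto simp: y_def\<close>)
      also have "(c+1) * (1/(\<mu>-c)) + real z * (real m2 - 1) * (1/(\<mu>-n)) = \<mu>"
      proof -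
        have d1: "\<mu> - c \<noteq> 0" "\<mu> - n \<noteq> 0" using mu muc by auto
        have "(c+1) * (1/(\<mu>-c)) + real z * (real m2 - 1) * (1/(\<mu>-n))
           = ((c+1)*(\<mu>-n) + real z * (real m2 - 1)*(\<mu>-c)) / ((\<mu>-c)*(\<mu>-n))"
          using d1 by (simp add: field_simps)
        also have "\<dots> = \<mu>" using d1 mu(2) by simp
        finally show ?thesis .
      qed
      finally show ?thesis using rs nb0[OF m1(1)] True N_def by (simp add: y_def)
    next
      case False
      show ?thesis
      proof (cases "i < m1")
        case True
        have "sum y (insert 0 ({1..<m1} - {i})) = 1 + sum y ({1..<m1} - {i})"
          by (subst sum.insert) (auto simp: y_def)
        also have "sum y ({1..<m1} - {i}) = c * (1/(\<mu>-c))"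
          by (rule sum_const_on'[of _ _ "1/(\<mu>-c)"]) (use cardA'[of i] True False  in \<open>auto simp: y_def\<close>)
        also have "1 + c * (1/(\<mu>-c)) = \<mu> * y i" using True False muc by (simp add: y_def field_simps)
        finally show ?thesis using rs nbA[of i m1 m2 z] True False N_def by simp
      next
        case False2: False
        have iB: "i \<in> {m1..<N}" using False2 i by auto
        have "sum y (insert 0 ({m1..<N} - pt m1 z i)) = 1 + sum y ({m1..<N} - pt m1 z i)"
          using m1 by (subst sum.insert) (auto simp: y_def)
        also have "sum y ({m1..<N} - pt m1 z i) = n * (1/(\<mu>-n))"
          by (rule sum_const_on'[of _ _ "1/(\<mu>-n)"]) (use cardB'[OF iB] m1  in \<open>auto simp: y_def\<close>)
        also have "1 + n * (1/(\<mu>-n)) = \<mu> * y i" using False2 False mu by (simp add: y_def field_simps)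
        finally show ?thesis using rs nbB[OF z0, of m1 i m2] iB m1 N_def by simp
      qed
    qed
  qed
  hence "\<mu> \<le> lam" using assms(6) N_def unfolding is_eigval_def by blast
  hence lamn: "lam > n" and lamc: "lam > c" using mu muc by auto
  have lampos: "lam > 0" using lamc m1 c_def by simp
  have ev: "\<And>i. i < N \<Longrightarrow> sum x {k. k < N \<and> skc_adj m1 m2 z i k} = lam * x i"
    using assms(4) rowsum N_def unfolding is_eigvec_def by metis
  define SA where "SA = sum x {1..<m1}"
  define SB where "SB = sum x {m1..<N}"
  define \<alpha> where "\<alpha> = (x 0 + SA) / (lam + 1)"
  have xa: "x a = \<alpha>" if a: "1 \<le> a" "a < m1" for a
  proof -
    have "lam * x a = sum x (insert 0 ({1..<m1} - {a}))"
      using ev[of a] nbA[OF a, of m2 z, folded N_def] a NN by simp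
    also have "\<dots> = x 0 + (SA - x a)"
      using a by (simp add: sum.insert sum_diff1 SA_def)
    finally show ?thesis using lampos unfolding \<alpha>_def by (simp add: field_simps)
  qed
  have SAe: "SA = (c+1) * \<alpha>" unfolding SA_def
    by (rule sum_const_on'[of _ _ \<alpha>]) (use cardA xa in auto)
  have "(lam + 1) * \<alpha> = x 0 + SA" using lampos unfolding \<alpha>_def by simp
  hence "lam * \<alpha> = x 0 + (SA - \<alpha>)" by (simp add: algebra_simps)
  hence alpha: "\<alpha> * (lam - c) = x 0" using SAe by (simp add: algebra_simps)
  have xb0: "lam * x b = x 0 + (SB - sum x (pt m1 z b))" if b: "b \<in> {m1..<N}" for b
  proof -
    have sub: "pt m1 z b \<subseteq> {m1..<N}" using pt_props(1)[OF z0, of m1 b m2] b m1 N_def by auto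
    have "lam * x b = sum x (insert 0 ({m1..<N} - pt m1 z b))"
      using ev[of b] nbB[OF z0, of m1 b m2] b m1 N_def by auto
    also have "\<dots> = x 0 + (SB - sum x (pt m1 z b))"
      using b sub m1 by (simp add: sum_diff SB_def finite_subset[OF sub])
    finally show ?thesis .
  qed
  define \<beta> where "\<beta> = (x 0 + SB) / (lam + z)"
  have xb: "x b = \<beta>" if b: "b \<in> {m1..<N}" for b
  proof -
    have same: "x b' = x b" if "b' \<in> pt m1 z b" for b'
    proof -
      have sub: "pt m1 z b \<subseteq> {m1..<N}" using pt_props(1)[OF z0, of m1 b m2] b m1 N_def by auto
      have "b' \<in> {m1..<N}" using sub that by auto
      hence "lam * x b' = x 0 + (SB - sum x (pt m1 z b))"
        using xb0 pt_same[OF z0, of m1 b m2 b'] b m1 N_def that by auto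
      thus ?thesis using xb0[OF b] lampos by (metis mult_cancel_left less_irrefl)
    qed
    have "sum x (pt m1 z b) = real z * x b"
      by (rule sum_const_on'[of _ _ "x b"]) (use pt_props(2)[OF z0, of m1 b m2] b m1 N_def same in \<open>auto simp: pt_def\<close>)
    thus ?thesis using xb0[OF b] lampos unfolding \<beta>_def by (simp add: field_simps)
  qed
  have SBe: "SB = real z * (real m2 - 1) * \<beta>" unfolding SB_def
    by (rule sum_const_on'[of _ _ \<beta>]) (use cardB xb in auto)
  have mN: "m1 \<in> {m1..<N}" using NN assms(2,3) by simp
  have "lam * \<beta> = x 0 + (SB - real z * \<beta>)"
    using xb[OF mN] lampos unfolding \<beta>_def by (simp add: field_simps)
  hence beta: "\<beta> * (lam - n) = x 0" using SBe by (simp add: n_def algebra_simps)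
  have x0: "x 0 \<noteq> 0"
  proof
    assume h: "x 0 = 0"
    hence "\<alpha> = 0" "\<beta> = 0" using alpha beta lamc lamn by auto
    hence "\<forall>i<N. x i = 0" using xa xb h by (metis atLeastLessThan_iff less_one not_le)
    thus False using assms(4) N_def unfolding is_eigvec_def by auto
  qed
  have il: "intensity x l 0 = (x 0)^2 / (lam - c)"
  proof -
    have "(x 0)^2 = (\<alpha> * x 0) * (lam - c)" unfolding power2_eq_square
      by (subst (1) alpha[symmetric]) (simp add: algebra_simps)
    thus ?thesis using xa[OF assms(7,8)] lamc unfolding intensity_def by simp
  qed
  have ik: "intensity x k 0 = (x 0)^2 / (lam - n)"
  proof -
    have "(x 0)^2 = (\<beta> * x 0) * (lam - n)" unfolding power2_eq_square
      by (subst (1) beta[symmetric]) (simp add: algebra_simps)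
    thus ?thesis using xb[of k] assms(9,10) N_def lamn unfolding intensity_def by simp
  qed
  have ineq: "1 / (lam - c) < 1 / (lam - n)" using lamn cn by (simp add: frac_less2)
  have x2: "(x 0)^2 > 0" using x0 by simp
  have f1: "(x 0)^2 / (lam - c) < (x 0)^2 / (lam - n)"
    using mult_strict_left_mono[OF ineq x2] by simp
  have f2: "\<bar>1 / (c - lam)\<bar> = 1 / (lam - c)" using lamc
    by (metis abs_minus_commute abs_of_pos diff_gt_0_iff_gt divide_pos_pos zero_less_one abs_divide abs_one)
  have f3: "\<bar>1 / (n - lam)\<bar> = 1 / (lam - n)" using lamn
    by (metis abs_minus_commute abs_of_pos diff_gt_0_iff_gt divide_pos_pos zero_less_one abs_divide abs_one)
  show ?thesis unfolding c_def[symmetric] n_def[symmetric] il ik f2 f3 using f1 ineq by (rule conjI)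
qed

end
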